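(* Let $\square$ be a cubical complex and $n \geq 0$. Then $\square$ embeds into $I^n$ (i.e. there is an injective map of cubical complexes $V(\square) \to V(I^n)$) if and only if the graph $G(\square)$ embeds into the graph $G(I^n)$, i.e. there is an injective map $V(\square) \to V(I^n)$ sending every edge of $\square$ to an edge of $I^n$.
   Context: A cubical complex consists of a finite vertex set $V$ and a collection $\square$ of nonempty subsets of $V$ (faces) such that: every singleton $\{v\}$, $v\in V$, is a face; for each face $F$ the poset $\hat F=\{G\in\square : G\subseteq F\}$ (ordered by inclusion) is isomorphic to the poset of nonempty faces of a cube (whose dimension is $\dim F$); and the intersection of two faces is empty or a face. $I^n$ denotes the $n$-cube as a cubical complex: vertex set $\{0,1\}^n$, and faces indexed by $(p_1,\dots,p_n)\in\{0,1,*\}^n$, the face being the set of $x\in\{0,1\}^n$ with $x_i=p_i$ whenever $p_i\neq *$. A map of cubical complexes is a function between vertex sets sending each face onto a face; an injective map is an embedding. The graph $G(\square)$ is the 1-skeleton: vertices and 1-dimensional faces (edges). *)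

theory Defs
  imports Main
begin

text \<open>The n-cube I^n: vertices are boolean lists of length n; faces are indexed
  by patterns p in {0,1,*}^n, encoded as lists of bool option (None = *).\<close>

definition cube_verts :: "nat \<Rightarrow> bool list set" where
  "cube_verts n = {x. length x = n}"

definition cube_face :: "nat \<Rightarrow> bool option list \<Rightarrow> bool list set" where
  "cube_face n p = {x. length x = n \<and> (\<forall>i<n. p ! i \<noteq> None \<longrightarrow> x ! i = the (p ! i))}"

definition cube_faces :: "nat \<Rightarrow> bool list set set" where
  "cube_faces n = {cube_face n p | p. length p = n}"

definition incl_iso :: "'a set set \<Rightarrow> 'b set set \<Rightarrow> bool" where
  "incl_iso A B \<longleftrightarrow> (\<exists>f. bij_betw f A B \<and> (\<forall>x\<in>A. \<forall>y\<in>A. x \<subseteq> y \<longleftrightarrow> f x \<subseteq> f y))"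

definition face_dim :: "'a set set \<Rightarrow> 'a set \<Rightarrow> nat \<Rightarrow> bool" where
  "face_dim Q F d \<longleftrightarrow> incl_iso {G\<in>Q. G \<subseteq> F} (cube_faces d)"

definition cubical_complex :: "'a set \<Rightarrow> 'a set set \<Rightarrow> bool" where
  "cubical_complex V Q \<longleftrightarrow>
     finite V \<and>
     (\<forall>F\<in>Q. F \<noteq> {} \<and> F \<subseteq> V) \<and>
     (\<forall>v\<in>V. {v} \<in> Q) \<and>
     (\<forall>F\<in>Q. \<exists>d. face_dim Q F d) \<and>
     (\<forall>F\<in>Q. \<forall>G\<in>Q. F \<inter> G = {} \<or> F \<inter> G \<in> Q)"

definition cc_map :: "'a set \<Rightarrow> 'a set set \<Rightarrow> 'b set \<Rightarrow> 'b set set \<Rightarrow> ('a \<Rightarrow> 'b) \<Rightarrow> bool" where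
  "cc_map V Q W R f \<longleftrightarrow> f ` V \<subseteq> W \<and> (\<forall>F\<in>Q. f ` F \<in> R)"

definition cc_embedding :: "'a set \<Rightarrow> 'a set set \<Rightarrow> 'b set \<Rightarrow> 'b set set \<Rightarrow> ('a \<Rightarrow> 'b) \<Rightarrow> bool" where
  "cc_embedding V Q W R f \<longleftrightarrow> cc_map V Q W R f \<and> inj_on f V"

definition cc_edges :: "'a set set \<Rightarrow> 'a set set" where
  "cc_edges Q = {F\<in>Q. face_dim Q F 1}"

definition graph_embedding :: "'a set \<Rightarrow> 'a set set \<Rightarrow> 'b set \<Rightarrow> 'b set set \<Rightarrow> ('a \<Rightarrow> 'b) \<Rightarrow> bool" where
  "graph_embedding V Q W R f \<longleftrightarrow>
     f ` V \<subseteq> W \<and> inj_on f V \<and> (\<forall>e\<in>cc_edges Q. f ` e \<in> cc_edges R)"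

end

theory Submission
  imports Defs
begin


definition flip :: "nat \<Rightarrow> bool list \<Rightarrow> bool list" where
  "flip k y = y[k := \<not> y ! k]"

lemma length_flip[simp]: "length (flip k y) = length y"
  by (simp add: flip_def)

lemma nth_flip: "j < length y \<Longrightarrow> flip k y ! j = (if j = k then \<not> y ! j else y ! j)"
  by (auto simp: flip_def nth_list_update)

lemma flip_flip[simp]: "flip k (flip k y) = y"
  by (rule nth_equalityI) (auto simp: nth_flip)

lemma flip_comm: "flip i (flip j y) = flip j (flip i y)"
  by (rule nth_equalityI) (auto simp: nth_flip)

lemma flip_neq: "k < length y \<Longrightarrow> flip k y \<noteq> y"
  by (metis nth_flip)

lemma flip_cancel:
  assumes "length y = n" "a < n" "b < n" "c < n" "e < n" "a \<noteq> b" "e \<noteq> b"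
    and eq: "flip c (flip a y) = flip e (flip b y)"
  shows "c = b"
proof -
  have "flip c (flip a y) ! b = flip e (flip b y) ! b" using eq by simp
  with assms(1-7) show ?thesis by (auto simp: nth_flip split: if_splits)
qed

lemma cube_face_sub: "cube_face n p \<subseteq> cube_verts n"
  by (auto simp: cube_face_def cube_verts_def)

lemma cube_faces_sub: "F \<in> cube_faces n \<Longrightarrow> F \<subseteq> cube_verts n"
  using cube_face_sub by (auto simp: cube_faces_def)

lemma cube_face_ne: "length p = n \<Longrightarrow> cube_face n p \<noteq> {}"
proof -
  assume "length p = n"
  let ?x = "map (\<lambda>oo. case oo of None \<Rightarrow> False | Some b \<Rightarrow> b) p"
  have "?x \<in> cube_face n p" using \<open>length p = n\<close> by (auto simp: cube_face_def)
  thus ?thesis by auto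
qed

lemma cube_faces_ne: "F \<in> cube_faces n \<Longrightarrow> F \<noteq> {}"
  using cube_face_ne by (auto simp: cube_faces_def)

lemma cube_single: "x \<in> cube_verts n \<Longrightarrow> {x} \<in> cube_faces n"
proof -
  assume x: "x \<in> cube_verts n"
  have "{x} = cube_face n (map Some x)"
  proof (rule set_eqI, rule iffI)
    fix y assume "y \<in> {x}" thus "y \<in> cube_face n (map Some x)" using x
      by (auto simp: cube_face_def cube_verts_def)
  next
    fix y assume "y \<in> cube_face n (map Some x)"
    hence "length y = n" "\<forall>i<n. y ! i = x ! i" using x by (auto simp: cube_face_def cube_verts_def)
    hence "y = x" using x by (auto intro: nth_equalityI simp: cube_verts_def)
    thus "y \<in> {x}" by simp
  qed
  moreover have "length (map Some x) = n" using x by (simp add: cube_verts_def)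
  ultimately show ?thesis by (auto simp: cube_faces_def)
qed

lemma cube_faces_1: "cube_faces 1 = {{[True]}, {[False]}, {[True],[False]}}"
proof -
  have L: "length x = Suc 0 \<longleftrightarrow> x = [True] \<or> x = [False]" for x :: "bool list"
    apply (cases x) apply simp apply (rename_tac a l) apply (case_tac l) apply (case_tac a) apply auto done
  have pl: "length p = 1 \<longleftrightarrow> p = [None] \<or> p = [Some True] \<or> p = [Some False]" for p :: "bool option list"
    apply (cases p) apply simp apply (rename_tac a l) apply (case_tac a) apply auto done
  have a: "cube_face 1 [None] = {[True],[False]}" by (auto simp: cube_face_def L)
  have b: "cube_face 1 [Some True] = {[True]}"
    by (auto simp: cube_face_def L) 
  have c: "cube_face 1 [Some False] = {[False]}"
    by (auto simp: cube_face_def L)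
  show ?thesis unfolding cube_faces_def pl using a b c by auto
qed

lemma iso3:
  assumes "a \<noteq> b" "c \<noteq> e"
  shows "incl_iso {{a},{b},{a,b}} {{c},{e},{c,e}}"
proof -
  define h where "h = (\<lambda>z. if z = a then c else e)"
  define f where "f = (\<lambda>S. h ` S)"
  have fa: "f {a} = {c}" "f {b} = {e}" "f {a,b} = {c,e}" using assms by (auto simp: f_def h_def)
  have "bij_betw f {{a},{b},{a,b}} {{c},{e},{c,e}}"
    unfolding bij_betw_def inj_on_def using fa assms by auto
  moreover have "\<forall>x\<in>{{a},{b},{a,b}}. \<forall>y\<in>{{a},{b},{a,b}}. x \<subseteq> y \<longleftrightarrow> f x \<subseteq> f y"
    using fa assms by auto
  ultimately show ?thesis unfolding incl_iso_def by blast
qed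

lemma edge_of:
  assumes ne: "\<forall>G\<in>R. G \<noteq> {}" and "a \<noteq> b" "{a} \<in> R" "{b} \<in> R" "{a,b} \<in> R"
  shows "{a,b} \<in> cc_edges R"
proof -
  have "{G\<in>R. G \<subseteq> {a,b}} = {{a},{b},{a,b}}"
  proof (rule set_eqI, rule iffI)
    fix G assume "G \<in> {G\<in>R. G \<subseteq> {a,b}}"
    hence "G \<noteq> {}" "G \<subseteq> {a,b}" using ne by auto
    thus "G \<in> {{a},{b},{a,b}}" by blast
  qed (use assms in auto)
  moreover have "incl_iso {{a},{b},{a,b}} (cube_faces 1)"
    unfolding cube_faces_1 using iso3[of a b "[True]" "[False]"] \<open>a \<noteq> b\<close>
    by (simp add: insert_commute)
  ultimately show ?thesis using assms by (simp add: cc_edges_def face_dim_def)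
qed

lemma edge_two:
  assumes ne: "\<forall>G\<in>R. G \<noteq> {}" and e: "e \<in> cc_edges R" and sing: "\<forall>x\<in>e. {x} \<in> R"
  shows "\<exists>a b. a \<noteq> b \<and> e = {a,b}"
proof -
  let ?S = "{G\<in>R. G \<subseteq> e}"
  have eR: "e \<in> R" and "incl_iso ?S (cube_faces 1)" using e by (auto simp: cc_edges_def face_dim_def)
  then obtain f where "bij_betw f ?S (cube_faces 1)" by (auto simp: incl_iso_def)
  hence cS: "card ?S = 3" unfolding cube_faces_1 by (simp add: bij_betw_same_card)
  hence fS: "finite ?S" by (metis card.infinite zero_neq_numeral)
  have "e \<noteq> {}" using ne eR by auto
  then obtain a where a: "a \<in> e" by auto
  show ?thesis
  proof (cases "e = {a}")
    case True
    have "?S \<subseteq> {{a}}" using ne True by auto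
    hence "card ?S \<le> card {{a}}" by (intro card_mono) auto
    hence "card ?S \<le> 1" by simp
    with cS show ?thesis by simp
  next
    case False
    then obtain b where b: "b \<in> e" "b \<noteq> a" using a by auto
    show ?thesis
    proof (cases "e = {a,b}")
      case True thus ?thesis using b by blast
    next
      case False
      then obtain c where c: "c \<in> e" "c \<noteq> a" "c \<noteq> b" using a b by auto
      have sub: "{{a},{b},{c},e} \<subseteq> ?S" using sing a b c eR by auto
      have "e \<noteq> {a}" "e \<noteq> {b}" "e \<noteq> {c}" using a b c by auto
      hence "card {{a},{b},{c},e} = 4" using b c by auto
      with card_mono[OF fS sub] cS show ?thesis by simp
    qed
  qed
qed

lemma cube_pair:
  assumes F: "{a,b} \<in> cube_faces n" and ab: "a \<noteq> b"
  shows "\<exists>k<n. b = flip k a"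
proof -
  obtain p where p: "length p = n" "{a,b} = cube_face n p" using F by (auto simp: cube_faces_def)
  have la: "length a = n" and lb: "length b = n" using p by (auto simp: cube_face_def)
  have "\<exists>i<n. a ! i \<noteq> b ! i"
  proof (rule ccontr)
    assume "\<not> (\<exists>i<n. a ! i \<noteq> b ! i)"
    hence "a = b" using la lb by (intro nth_equalityI) auto
    thus False using ab by simp
  qed
  then obtain i where i: "i < n" "a ! i \<noteq> b ! i" by blast
  have pi: "p ! i = None"
  proof (rule ccontr)
    assume "p ! i \<noteq> None"
    moreover have "a \<in> cube_face n p" "b \<in> cube_face n p" using p by auto
    ultimately show False using i by (auto simp: cube_face_def)
  qed
  have "\<forall>j<n. j \<noteq> i \<longrightarrow> a ! j = b ! j"
  proof (intro allI impI, rule ccontr)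
    fix j assume j: "j < n" "j \<noteq> i" "a ! j \<noteq> b ! j"
    have pj: "p ! j = None"
    proof (rule ccontr)
      assume "p ! j \<noteq> None"
      moreover have "a \<in> cube_face n p" "b \<in> cube_face n p" using p by auto
      ultimately show False using j by (auto simp: cube_face_def)
    qed
    have "flip i a \<in> cube_face n p"
    proof -
      have "a \<in> cube_face n p" using p by auto
      thus ?thesis using pi la by (auto simp: cube_face_def nth_flip)
    qed
    hence "flip i a \<in> {a,b}" using p by auto
    moreover have "flip i a \<noteq> a" using flip_neq i la by auto
    moreover have "flip i a \<noteq> b" using j la i by (metis nth_flip)
    ultimately show False by auto
  qed
  hence "b = flip i a" using i la lb
    by (intro nth_equalityI) (auto simp: nth_flip)
  thus ?thesis using i by blast
qed



lemma count_induct[consumes 1, case_names base step]: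
  assumes xv: "x \<in> cube_verts d" and base: "P (replicate d False)"
    and step: "\<And>x i. x \<in> cube_verts d \<Longrightarrow> i < d \<Longrightarrow> \<not> x ! i \<Longrightarrow> P x \<Longrightarrow> P (x[i := True])"
  shows "P x"
  using xv
proof (induction "card {i. i < d \<and> x ! i}" arbitrary: x)
  case 0
  have "{i. i < d \<and> x ! i} = {}" using 0 by (simp add: card_eq_0_iff)
  hence "x = replicate d False" using 0 by (intro nth_equalityI) (auto simp: cube_verts_def)
  thus ?case using base by simp
next
  case (Suc m)
  have "{i. i < d \<and> x ! i} \<noteq> {}" using Suc(2) by (metis card.empty Zero_not_Suc)
  then obtain i where i: "i < d" "x ! i" by auto
  define x' where "x' = x[i := False]"
  have x'v: "x' \<in> cube_verts d" using Suc(3) by (simp add: x'_def cube_verts_def)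
  have li: "length x = d" using Suc(3) by (simp add: cube_verts_def)
  have "{j. j < d \<and> x' ! j} = {j. j < d \<and> x ! j} - {i}"
  proof (rule set_eqI)
    fix j show "j \<in> {j. j < d \<and> x' ! j} \<longleftrightarrow> j \<in> {j. j < d \<and> x ! j} - {i}"
      by (cases "j = i") (auto simp: x'_def li)
  qed
  hence "card {j. j < d \<and> x' ! j} = m" using Suc(2) i by simp
  hence "P x'" using Suc(1) x'v by blast
  moreover have "\<not> x' ! i" using li i by (simp add: x'_def)
  moreover have "x'[i := True] = x" using i li by (simp add: x'_def) (metis i(2) list_update_id)
  ultimately show ?case using step[OF x'v i(1)] by metis
qed

lemma cube_hom:
  assumes len: "\<forall>x\<in>cube_verts d. g x \<in> cube_verts n"
    and inj: "inj_on g (cube_verts d)"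
    and adj: "\<forall>x\<in>cube_verts d. \<forall>i<d. \<exists>k<n. g (flip i x) = flip k (g x)"
  shows "g ` cube_verts d \<in> cube_faces n"
proof -
  define z where "z = replicate d False"
  have zv: "z \<in> cube_verts d" by (simp add: z_def cube_verts_def)
  have flv: "x \<in> cube_verts d \<Longrightarrow> flip i x \<in> cube_verts d" for x i
    by (simp add: cube_verts_def)
  have lg: "x \<in> cube_verts d \<Longrightarrow> length (g x) = n" for x using len by (auto simp: cube_verts_def)
  have lx: "x \<in> cube_verts d \<Longrightarrow> length x = d" for x by (simp add: cube_verts_def)
  define \<delta> where "\<delta> i = (SOME k. k < n \<and> g (flip i z) = flip k (g z))" for i
  have \<delta>: "\<delta> i < n \<and> g (flip i z) = flip (\<delta> i) (g z)" if "i < d" for i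
    unfolding \<delta>_def by (rule someI_ex) (use adj zv that in blast)
  have \<delta>inj: "\<delta> i \<noteq> \<delta> j" if "i < d" "j < d" "i \<noteq> j" for i j
  proof
    assume "\<delta> i = \<delta> j"
    hence "g (flip i z) = g (flip j z)" using \<delta> that by simp
    hence "flip i z = flip j z" using inj flv zv by (auto dest: inj_onD)
    hence "flip i z ! i = flip j z ! i" by simp
    thus False using that by (simp add: nth_flip z_def)
  qed
  have P: "\<forall>j<d. g (flip j x) = flip (\<delta> j) (g x)" if "x \<in> cube_verts d" for x
    using that
  proof (induction x rule: count_induct)
    case base thus ?case using \<delta> by (simp add: z_def)
  next
    case (step x' i)
    have fx: "flip i x' = x'[i := True]" using step by (simp add: flip_def)
    define x where "x = x'[i := True]"
    have xv: "x \<in> cube_verts d" using step by (simp add: x_def cube_verts_def)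
    have gx: "g x = flip (\<delta> i) (g x')" using step(2,4) fx x_def by metis
    have x'x: "x' = flip i x" using fx x_def by (metis flip_flip)
    show ?case unfolding x_def[symmetric]
    proof (intro allI impI)
      fix j assume j: "j < d"
      show "g (flip j x) = flip (\<delta> j) (g x)"
      proof (cases "j = i")
        case True
        thus ?thesis using gx x'x by simp
      next
        case False
        obtain c where c: "c < n" "g (flip j x) = flip c (g x)" using adj xv j by blast
        obtain e where e: "e < n" "g (flip i (flip j x')) = flip e (g (flip j x'))"
          using adj flv[OF step(1)] step(2) by blast
        have sw: "flip i (flip j x') = flip j x" using x'x flip_comm by (metis flip_flip)
        have gj: "g (flip j x') = flip (\<delta> j) (g x')" using step(4) j by blast
        have eq: "flip c (flip (\<delta> i) (g x')) = flip e (flip (\<delta> j) (g x'))"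
          using c e sw gj gx by simp
        have ci: "c \<noteq> \<delta> i"
        proof
          assume "c = \<delta> i"
          hence "g (flip j x) = g x'" using c gx by simp
          hence "flip j x = x'" using inj flv xv step(1) by (auto dest: inj_onD)
          hence "flip j x ! j = x' ! j" by simp
          thus False using j False xv by (simp add: nth_flip x_def cube_verts_def)
        qed
        have ej: "e \<noteq> \<delta> j"
        proof
          assume "e = \<delta> j"
          hence "g (flip i (flip j x')) = g x'" using e gj by simp
          hence "flip i (flip j x') = x'" using inj flv step(1) by (auto dest: inj_onD)
          hence "flip i (flip j x') ! i = x' ! i" by simp
          thus False using step(2) False step(1) by (simp add: nth_flip lx)
        qed
        have "c = \<delta> j"
          by (rule flip_cancel[OF lg[OF step(1)] _ _ c(1) e(1) \<delta>inj[OF step(2) j not_sym[OF False]] ej eq])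
             (use \<delta> step(2) j in auto)
        thus ?thesis using c by simp
      qed
    qed
  qed
  have Q: "\<forall>k<n. g x ! k = (g z ! k \<noteq> (\<exists>i<d. x ! i \<and> \<delta> i = k))" if "x \<in> cube_verts d" for x
    using that
  proof (induction x rule: count_induct)
    case base
    have "\<forall>i<d. \<not> replicate d False ! i" by simp
    thus ?case by (auto simp: z_def)
  next
    case (step x' i)
    have fx: "flip i x' = x'[i := True]" using step by (simp add: flip_def)
    have gx: "g (x'[i := True]) = flip (\<delta> i) (g x')" using P[OF step(1)] step(2) fx by metis
    show ?case
    proof (intro allI impI)
      fix k assume k: "k < n"
      have l': "length x' = d" using step(1) lx by blast
      show "g (x'[i := True]) ! k = (g z ! k \<noteq> (\<exists>j<d. x'[i := True] ! j \<and> \<delta> j = k))"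
      proof (cases "k = \<delta> i")
        case True
        have e1: "(\<exists>j<d. x'[i := True] ! j \<and> \<delta> j = k) = True"
          using True step(2) l' by auto
        have e2: "(\<exists>j<d. x' ! j \<and> \<delta> j = k) = False"
          using True step(2,3) \<delta>inj by auto
        show ?thesis using step(4) k gx e1 e2 True lg[OF step(1)] by (simp add: nth_flip)
      next
        case False
        have e1: "(\<exists>j<d. x'[i := True] ! j \<and> \<delta> j = k) = (\<exists>j<d. x' ! j \<and> \<delta> j = k)"
          using False l' by (auto, (metis nth_list_update_neq)+)
        show ?thesis using step(4) k gx e1 False lg[OF step(1)] by (simp add: nth_flip)
      qed
    qed
  qed
  define p where "p = map (\<lambda>k. if k \<in> \<delta> ` {..<d} then None else Some (g z ! k)) [0..<n]"
  have "g ` cube_verts d = cube_face n p"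
  proof (rule set_eqI, rule iffI)
    fix y assume "y \<in> g ` cube_verts d"
    then obtain x where x: "x \<in> cube_verts d" "y = g x" by auto
    show "y \<in> cube_face n p"
      unfolding cube_face_def p_def using Q[OF x(1)] lg[OF x(1)] x(2) by auto
  next
    fix y assume y: "y \<in> cube_face n p"
    hence ly: "length y = n" by (simp add: cube_face_def)
    define x where "x = map (\<lambda>i. y ! (\<delta> i) \<noteq> g z ! (\<delta> i)) [0..<d]"
    have xv: "x \<in> cube_verts d" by (simp add: x_def cube_verts_def)
    have "g x = y"
    proof (rule nth_equalityI)
      show "length (g x) = length y" using lg[OF xv] ly by simp
    next
      fix k assume "k < length (g x)"
      hence k: "k < n" using lg[OF xv] by simp
      show "g x ! k = y ! k"
      proof (cases "k \<in> \<delta> ` {..<d}")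
        case True
        then obtain i0 where i0: "i0 < d" "k = \<delta> i0" by auto
        have "(\<exists>i<d. x ! i \<and> \<delta> i = k) = x ! i0"
          using i0 \<delta>inj by (auto simp: x_def)
        thus ?thesis using Q[OF xv] k i0 by (auto simp: x_def)
      next
        case False
        have "y ! k = g z ! k" using y k False by (auto simp: cube_face_def p_def)
        moreover have "\<not> (\<exists>i<d. x ! i \<and> \<delta> i = k)" using False by auto
        ultimately show ?thesis using Q[OF xv] k by simp
      qed
    qed
    thus "y \<in> g ` cube_verts d" using xv by blast
  qed
  moreover have "length p = n" by (simp add: p_def)
  ultimately show ?thesis by (auto simp: cube_faces_def)
qed



lemma cube_edge:
  assumes x: "x \<in> cube_verts d" and i: "i < d"
  shows "{x, flip i x} \<in> cube_faces d"
proof -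
  have lx: "length x = d" using x by (simp add: cube_verts_def)
  let ?p = "(map Some x)[i := None]"
  have "{x, flip i x} = cube_face d ?p"
  proof (rule set_eqI, rule iffI)
    fix y assume "y \<in> {x, flip i x}"
    thus "y \<in> cube_face d ?p" using lx i by (auto simp: cube_face_def nth_flip nth_list_update)
  next
    fix y assume "y \<in> cube_face d ?p"
    hence ly: "length y = d" and ag: "\<forall>j<d. j \<noteq> i \<longrightarrow> y ! j = x ! j"
      using lx by (auto simp: cube_face_def nth_list_update)
    show "y \<in> {x, flip i x}"
    proof (cases "y ! i = x ! i")
      case True
      have "y = x"
      proof (rule nth_equalityI)
        show "length y = length x" using ly lx by simp
        fix j assume "j < length y"
        thus "y ! j = x ! j" using True ly ag by (cases "j = i") auto
      qed
      thus ?thesis by simp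
    next
      case False
      hence "y = flip i x" using ly lx ag by (intro nth_equalityI) (auto simp: nth_flip)
      thus ?thesis by simp
    qed
  qed
  moreover have "length ?p = d" using lx by simp
  ultimately show ?thesis by (auto simp: cube_faces_def)
qed

lemma face_image:
  assumes cc: "cubical_complex V Q" and FQ: "F \<in> Q" and fd: "face_dim Q F d"
    and ge: "graph_embedding V Q (cube_verts n) (cube_faces n) f"
  shows "f ` F \<in> cube_faces n"
proof -
  define D where "D = {G\<in>Q. G \<subseteq> F}"
  obtain \<phi> where bij: "bij_betw \<phi> D (cube_faces d)"
    and ord: "\<forall>x\<in>D. \<forall>y\<in>D. x \<subseteq> y \<longleftrightarrow> \<phi> x \<subseteq> \<phi> y"
    using fd unfolding face_dim_def incl_iso_def D_def by blast
  have ne: "\<forall>G\<in>Q. G \<noteq> {}" and QV: "\<forall>G\<in>Q. G \<subseteq> V" and sQ: "\<forall>v\<in>V. {v} \<in> Q"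
    using cc unfolding cubical_complex_def by blast+
  have FV: "F \<subseteq> V" using QV FQ by auto
  have sing: "a \<in> F \<Longrightarrow> {a} \<in> D" for a using sQ FV by (auto simp: D_def)
  have phiD: "G \<in> D \<Longrightarrow> \<phi> G \<in> cube_faces d" for G using bij by (rule bij_betw_apply)
  have surjD: "H \<in> cube_faces d \<Longrightarrow> \<exists>G\<in>D. \<phi> G = H" for H
  proof -
    assume "H \<in> cube_faces d"
    hence "H \<in> \<phi> ` D" using bij_betw_imp_surj_on[OF bij] by simp
    then obtain G where "G \<in> D" "H = \<phi> G" by (rule imageE)
    thus ?thesis by blast
  qed
  have injD: "G \<in> D \<Longrightarrow> G' \<in> D \<Longrightarrow> \<phi> G = \<phi> G' \<Longrightarrow> G = G'" for G G'
    using bij_betw_imp_inj_on[OF bij] by (rule inj_onD)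
  have neD: "G \<in> D \<Longrightarrow> G \<noteq> {}" for G using ne by (auto simp: D_def)
  have S1: "\<exists>x\<in>cube_verts d. \<phi> {a} = {x}" if a: "a \<in> F" for a
  proof -
    have "\<phi> {a} \<in> cube_faces d" using phiD sing a by blast
    then obtain x where x: "x \<in> \<phi> {a}" using cube_faces_ne by blast
    have xv: "x \<in> cube_verts d" using x cube_faces_sub \<open>\<phi> {a} \<in> cube_faces d\<close> by blast
    obtain G where G: "G \<in> D" "\<phi> G = {x}" using surjD cube_single[OF xv] by blast
    have "\<phi> G \<subseteq> \<phi> {a}" using G(2) x by simp
    hence "G \<subseteq> {a}" using ord G(1) sing[OF a] by blast
    hence "G = {a}" using neD[OF G(1)] by auto
    thus ?thesis using G xv by auto
  qed
  have S2: "\<exists>a\<in>F. \<phi> {a} = {x}" if xv: "x \<in> cube_verts d" for x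
  proof -
    obtain G where G: "G \<in> D" "\<phi> G = {x}" using surjD cube_single[OF xv] by blast
    obtain a where a: "a \<in> G" using neD[OF G(1)] by auto
    have aF: "a \<in> F" using G(1) a by (auto simp: D_def)
    have "{a} \<subseteq> G" using a by simp
    hence "\<phi> {a} \<subseteq> \<phi> G" using ord G(1) sing[OF aF] by blast
    hence "\<phi> {a} \<subseteq> {x}" using G(2) by simp
    moreover have "\<phi> {a} \<noteq> {}" using phiD[OF sing[OF aF]] cube_faces_ne by blast
    ultimately show ?thesis using aF by auto
  qed
  define v where "v x = (SOME a. a \<in> F \<and> \<phi> {a} = {x})" for x
  have vF: "v x \<in> F \<and> \<phi> {v x} = {x}" if "x \<in> cube_verts d" for x
    unfolding v_def by (rule someI_ex) (use S2[OF that] in blast)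
  have vinj: "inj_on v (cube_verts d)"
    by (rule inj_onI) (metis vF singleton_inject)
  have vimg: "v ` cube_verts d = F"
  proof
    show "v ` cube_verts d \<subseteq> F" using vF by auto
  next
    show "F \<subseteq> v ` cube_verts d"
    proof
      fix a assume a: "a \<in> F"
      obtain x where x: "x \<in> cube_verts d" "\<phi> {a} = {x}" using S1[OF a] by blast
      have "{v x} = {a}" using injD[OF sing[OF conjunct1[OF vF[OF x(1)]]] sing[OF a]] vF[OF x(1)] x(2)
        by simp
      thus "a \<in> v ` cube_verts d" using x(1) by auto
    qed
  qed
  have finj: "inj_on f V" and fW: "f ` V \<subseteq> cube_verts n"
    and fe: "\<forall>e\<in>cc_edges Q. f ` e \<in> cc_edges (cube_faces n)"
    using ge by (auto simp: graph_embedding_def)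
  have adj: "\<exists>k<n. f (v (flip i x)) = flip k (f (v x))" if x: "x \<in> cube_verts d" and i: "i < d" for x i
  proof -
    have xf: "flip i x \<in> cube_verts d" using x by (simp add: cube_verts_def)
    have lx: "length x = d" using x by (simp add: cube_verts_def)
    obtain G where G: "G \<in> D" "\<phi> G = {x, flip i x}" using surjD cube_edge[OF x i] by blast
    have "G = {v x, v (flip i x)}"
    proof
      show "G \<subseteq> {v x, v (flip i x)}"
      proof
        fix a assume a: "a \<in> G"
        have aF: "a \<in> F" using G(1) a by (auto simp: D_def)
        obtain y where y: "y \<in> cube_verts d" "\<phi> {a} = {y}" using S1[OF aF] by blast
        have "{a} \<subseteq> G" using a by simp
        hence "\<phi> {a} \<subseteq> \<phi> G" using ord G(1) sing[OF aF] by blast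
        hence yy: "y \<in> {x, flip i x}" using y G by auto
        have "{v y} = {a}" using injD[OF sing[OF conjunct1[OF vF[OF y(1)]]] sing[OF aF]] vF[OF y(1)] y(2)
          by simp
        thus "a \<in> {v x, v (flip i x)}" using yy by auto
      qed
    next
      have "\<phi> {v x} \<subseteq> \<phi> G" using G(2) vF[OF x] by simp
      hence "{v x} \<subseteq> G" using ord G(1) sing[OF conjunct1[OF vF[OF x]]] by blast
      moreover have "\<phi> {v (flip i x)} \<subseteq> \<phi> G" using G(2) vF[OF xf] by simp
      hence "{v (flip i x)} \<subseteq> G" using ord G(1) sing[OF conjunct1[OF vF[OF xf]]] by blast
      ultimately show "{v x, v (flip i x)} \<subseteq> G" by auto
    qed
    hence GQ: "{v x, v (flip i x)} \<in> Q" using G(1) by (auto simp: D_def)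
    have neq: "v x \<noteq> v (flip i x)"
      using vinj x xf flip_neq[of i x] lx i by (metis inj_onD)
    have vV: "v x \<in> V" "v (flip i x) \<in> V" using vF x xf FV by auto
    have "{v x, v (flip i x)} \<in> cc_edges Q"
      by (rule edge_of) (use ne neq GQ sQ vV in auto)
    hence "f ` {v x, v (flip i x)} \<in> cc_edges (cube_faces n)" using fe by blast
    hence "{f (v x), f (v (flip i x))} \<in> cube_faces n" by (simp add: cc_edges_def)
    moreover have "f (v x) \<noteq> f (v (flip i x))" using finj vV neq by (metis inj_onD)
    ultimately show ?thesis using cube_pair by blast
  qed
  have "(f \<circ> v) ` cube_verts d \<in> cube_faces n"
  proof (rule cube_hom)
    show "\<forall>x\<in>cube_verts d. (f \<circ> v) x \<in> cube_verts n" using vF FV fW by (simp add: image_subset_iff subset_iff)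
    show "inj_on (f \<circ> v) (cube_verts d)"
      by (rule comp_inj_on[OF vinj]) (use finj FV vimg in \<open>metis inj_on_subset\<close>)
    show "\<forall>x\<in>cube_verts d. \<forall>i<d. \<exists>k<n. (f \<circ> v) (flip i x) = flip k ((f \<circ> v) x)"
      using adj by simp
  qed
  thus ?thesis by (simp only: image_comp[symmetric] vimg)
qed


theorem mainTheorem1:
  fixes V :: "'a set" and Q :: "'a set set" and n :: nat
  assumes "cubical_complex V Q"
  shows "(\<exists>f. cc_embedding V Q (cube_verts n) (cube_faces n) f) \<longleftrightarrow>
         (\<exists>f. graph_embedding V Q (cube_verts n) (cube_faces n) f)"
proof
  have ne: "\<forall>G\<in>Q. G \<noteq> {}" and QV: "\<forall>G\<in>Q. G \<subseteq> V" and sQ: "\<forall>v\<in>V. {v} \<in> Q"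
    using assms unfolding cubical_complex_def by blast+
  assume "\<exists>f. cc_embedding V Q (cube_verts n) (cube_faces n) f"
  then obtain f where fW: "f ` V \<subseteq> cube_verts n" and fQ: "\<forall>F\<in>Q. f ` F \<in> cube_faces n"
    and finj: "inj_on f V"
    unfolding cc_embedding_def cc_map_def by blast
  have "\<forall>e\<in>cc_edges Q. f ` e \<in> cc_edges (cube_faces n)"
  proof
    fix e assume e: "e \<in> cc_edges Q"
    have eQ: "e \<in> Q" using e by (simp add: cc_edges_def)
    have "\<forall>x\<in>e. {x} \<in> Q" using eQ QV sQ by blast
    then obtain a b where ab: "a \<noteq> b" "e = {a,b}" using edge_two[OF ne e] by blast
    have aV: "a \<in> V" "b \<in> V" using eQ QV ab by auto
    have fe: "f ` e = {f a, f b}" using ab by simp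
    have "{f a, f b} \<in> cube_faces n" using fQ eQ fe by metis
    moreover have "f a \<noteq> f b" using finj aV ab by (metis inj_onD)
    moreover have "{f a} \<in> cube_faces n" "{f b} \<in> cube_faces n"
      using cube_single fW aV by blast+
    ultimately have "{f a, f b} \<in> cc_edges (cube_faces n)"
      using edge_of[of "cube_faces n"] cube_faces_ne by blast
    thus "f ` e \<in> cc_edges (cube_faces n)" using fe by simp
  qed
  thus "\<exists>f. graph_embedding V Q (cube_verts n) (cube_faces n) f"
    using fW finj unfolding graph_embedding_def by blast
next
  assume "\<exists>f. graph_embedding V Q (cube_verts n) (cube_faces n) f"
  then obtain f where ge: "graph_embedding V Q (cube_verts n) (cube_faces n) f" by blast
  have "\<forall>F\<in>Q. f ` F \<in> cube_faces n"
  proof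
    fix F assume F: "F \<in> Q"
    then obtain d where "face_dim Q F d" using assms unfolding cubical_complex_def by blast
    thus "f ` F \<in> cube_faces n" using face_image[OF assms F _ ge] by blast
  qed
  thus "\<exists>f. cc_embedding V Q (cube_verts n) (cube_faces n) f"
    using ge unfolding cc_embedding_def cc_map_def graph_embedding_def by blast
qed

end
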